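(* Let $G$ be a cubic graph and $F$ the edge set of a spanning tree of $G$. Then every twisted graph $T=(\vec G,G,<,A)$, with $<$ a total order on the edge set, has a positive sequence on $F$.
   Context: Signed sets on a finite set $E$: pairs $X=(X^+,X^-)$ of disjoint subsets, $X(e)=+1,-1,0$ according as $e\in X^+$, $e\in X^-$, or neither; support $\underline X=X^+\cup X^-$. Conformal: no $e$ with $X(e)=-Y(e)\ne0$; composition $(X\circ Y)(e)=X(e)$ if $X(e)\ne0$, else $Y(e)$. For a total order $<$ on $E$, $\mathcal C(<)=\{(\{e_1,e_3\},\{e_2\}),(\{e_2\},\{e_1,e_3\}):e_1<e_2<e_3\}$ (circuits of the rank 2 oriented matroid $\mathcal M(<)$; vectors are compositions of pairwise conformal families of circuits); for a partial order $\prec$, $\mathcal C(\prec)=\bigcap_{<\supseteq\prec}\mathcal C(<)$. For a directed graph $\vec G=(V,\vec E)$ (no loops, parallel or antiparallel edges), underlying simple graph $G=(V,E)$, a strong map $\mathcal M^*(\vec G)\to\mathcal M(<)$ means every signed minimal cut $(\{(u,w):u\in S,w\notin S\},\{(u,w):w\in S,u\notin S\})$ ($S$, $V\setminus S$ inducing connected subgraphs) is a vector of $\mathcal M(<)$; $C^*_v=(\{(u,v)\in\vec E\},\{(v,u)\in\vec E\})$. A twisted graph $T=(\vec G,G,\prec,A)$: $\prec$ a partial order on $E$, $G$ three-edge-connected, $A\subset\mathcal C(\prec)$, a strong map $\mathcal M^*(\vec G)\to\mathcal M(<)$ for every total $<\supseteq\prec$, and a partition $A=\bigsqcup_v A_v$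 with members of $A_v$ pairwise conformal and composing to $C^*_v$. A positive sequence for $T$ on $F$ is an enumeration $A=\{a_1,\dots,a_m\}$ ($m=|A|$) and an enumeration $F=\{f_2,\dots,f_m\}\subset E$ of distinct edges such that for each $2\le j\le m$: $a_j(f_j)\ne0$; $a_i(f_j)=0$ for all $i>j$; and $a_i(f_j)\in\{0,-a_j(f_j)\}$ for all $i<j$. *)

theory Defs
  imports Main
begin

text \<open>A signed set on ground type 'e is a pair (X+, X-) of (disjoint) sets.\<close>
type_synonym 'e sset = "'e set \<times> 'e set"

definition ssign :: "'e sset \<Rightarrow> 'e \<Rightarrow> int" where
  "ssign X e = (if e \<in> fst X then 1 else if e \<in> snd X then -1 else 0)"

definition conformal :: "'e sset \<Rightarrow> 'e sset \<Rightarrow> bool" where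
  "conformal X Y \<longleftrightarrow> (\<forall>e. \<not> (ssign X e = - ssign Y e \<and> ssign X e \<noteq> 0))"

text \<open>Composition: (X o Y)(e) = X(e) if X(e) /= 0, else Y(e).\<close>
definition scomp :: "'e sset \<Rightarrow> 'e sset \<Rightarrow> 'e sset" where
  "scomp X Y = (fst X \<union> (fst Y - snd X), snd X \<union> (snd Y - fst X))"

definition scomp_list :: "'e sset list \<Rightarrow> 'e sset" where
  "scomp_list xs = foldr scomp xs ({}, {})"

definition composes_to :: "'e sset set \<Rightarrow> 'e sset \<Rightarrow> bool" where
  "composes_to S X \<longleftrightarrow> finite S \<and> (\<forall>Y\<in>S. \<forall>Z\<in>S. conformal Y Z)
      \<and> (\<exists>xs. set xs = S \<and> scomp_list xs = X)"

definition strict_partial_order_on :: "'e set \<Rightarrow> ('e \<times> 'e) set \<Rightarrow> bool" where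
  "strict_partial_order_on E r \<longleftrightarrow> r \<subseteq> E \<times> E \<and> irrefl r \<and> trans r"

definition strict_total_order_on :: "'e set \<Rightarrow> ('e \<times> 'e) set \<Rightarrow> bool" where
  "strict_total_order_on E r \<longleftrightarrow> strict_partial_order_on E r
      \<and> (\<forall>x\<in>E. \<forall>y\<in>E. x \<noteq> y \<longrightarrow> (x, y) \<in> r \<or> (y, x) \<in> r)"

definition circuits_tot :: "('e \<times> 'e) set \<Rightarrow> 'e sset set" where
  "circuits_tot lt =
     {({e1, e3}, {e2}) | e1 e2 e3. (e1, e2) \<in> lt \<and> (e2, e3) \<in> lt}
   \<union> {({e2}, {e1, e3}) | e1 e2 e3. (e1, e2) \<in> lt \<and> (e2, e3) \<in> lt}"

definition circuits_po :: "'e set \<Rightarrow> ('e \<times> 'e) set \<Rightarrow> 'e sset set" where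
  "circuits_po E pr = (\<Inter> {circuits_tot lt | lt. strict_total_order_on E lt \<and> pr \<subseteq> lt})"

definition is_vector_tot :: "('e \<times> 'e) set \<Rightarrow> 'e sset \<Rightarrow> bool" where
  "is_vector_tot lt X \<longleftrightarrow> (\<exists>S. S \<subseteq> circuits_tot lt \<and> composes_to S X)"

text \<open>A directed graph (V, Ed): finite, no loops, no parallel or antiparallel edges
  (parallel edges are excluded automatically since Ed is a set of pairs).
  The underlying simple graph G has an edge {u,w} for each (u,w) in Ed; we identify
  the edge set E of G with Ed.\<close>
definition digraph_wf :: "'v set \<Rightarrow> ('v \<times> 'v) set \<Rightarrow> bool" where
  "digraph_wf V Ed \<longleftrightarrow> finite V \<and> Ed \<subseteq> V \<times> V
     \<and> (\<forall>(u, w)\<in>Ed. u \<noteq> w \<and> (w, u) \<notin> Ed)"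

definition adj :: "('v \<times> 'v) set \<Rightarrow> ('v \<times> 'v) set" where
  "adj D = {(u, w). (u, w) \<in> D \<or> (w, u) \<in> D}"

definition connected_on :: "('v \<times> 'v) set \<Rightarrow> 'v set \<Rightarrow> bool" where
  "connected_on D W \<longleftrightarrow> W \<noteq> {} \<and> (\<forall>x\<in>W. \<forall>y\<in>W. (x, y) \<in> (adj D \<inter> W \<times> W)\<^sup>*)"

definition three_edge_connected :: "'v set \<Rightarrow> ('v \<times> 'v) set \<Rightarrow> bool" where
  "three_edge_connected V Ed \<longleftrightarrow>
     (\<forall>D. D \<subseteq> Ed \<and> card D \<le> 2 \<longrightarrow> connected_on (Ed - D) V)"

definition cubic :: "'v set \<Rightarrow> ('v \<times> 'v) set \<Rightarrow> bool" where
  "cubic V Ed \<longleftrightarrow> (\<forall>v\<in>V. card {e\<in>Ed. fst e = v \<or> snd e = v} = 3)"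

definition has_cycle :: "('v \<times> 'v) set \<Rightarrow> bool" where
  "has_cycle D \<longleftrightarrow> (\<exists>vs. length vs \<ge> 3 \<and> distinct vs
      \<and> (\<forall>i < length vs. (vs ! i, vs ! ((i + 1) mod length vs)) \<in> adj D))"

definition spanning_tree :: "'v set \<Rightarrow> ('v \<times> 'v) set \<Rightarrow> ('v \<times> 'v) set \<Rightarrow> bool" where
  "spanning_tree V Ed F \<longleftrightarrow> F \<subseteq> Ed \<and> connected_on F V \<and> \<not> has_cycle F"

definition signed_cut :: "('v \<times> 'v) set \<Rightarrow> 'v set \<Rightarrow> ('v \<times> 'v) sset" where
  "signed_cut Ed S = ({(u, w)\<in>Ed. u \<in> S \<and> w \<notin> S}, {(u, w)\<in>Ed. w \<in> S \<and> u \<notin> S})"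

definition signed_min_cuts :: "'v set \<Rightarrow> ('v \<times> 'v) set \<Rightarrow> ('v \<times> 'v) sset set" where
  "signed_min_cuts V Ed = {signed_cut Ed S | S. S \<subseteq> V \<and> connected_on Ed S \<and> connected_on Ed (V - S)}"

definition strong_map :: "'v set \<Rightarrow> ('v \<times> 'v) set \<Rightarrow> (('v \<times> 'v) \<times> ('v \<times> 'v)) set \<Rightarrow> bool" where
  "strong_map V Ed lt \<longleftrightarrow> (\<forall>X\<in>signed_min_cuts V Ed. is_vector_tot lt X)"

definition star_cocircuit :: "('v \<times> 'v) set \<Rightarrow> 'v \<Rightarrow> ('v \<times> 'v) sset" where
  "star_cocircuit Ed v = ({(u, w)\<in>Ed. w = v}, {(u, w)\<in>Ed. u = v})"

definition twisted_graph ::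
  "'v set \<Rightarrow> ('v \<times> 'v) set \<Rightarrow> (('v \<times> 'v) \<times> ('v \<times> 'v)) set \<Rightarrow> ('v \<times> 'v) sset set \<Rightarrow> bool" where
  "twisted_graph V Ed pr A \<longleftrightarrow>
     digraph_wf V Ed \<and> strict_partial_order_on Ed pr \<and> three_edge_connected V Ed
     \<and> A \<subseteq> circuits_po Ed pr
     \<and> (\<forall>lt. strict_total_order_on Ed lt \<and> pr \<subseteq> lt \<longrightarrow> strong_map V Ed lt)
     \<and> (\<exists>Av. A = (\<Union>v\<in>V. Av v)
           \<and> (\<forall>v\<in>V. \<forall>w\<in>V. v \<noteq> w \<longrightarrow> Av v \<inter> Av w = {})
           \<and> (\<forall>v\<in>V. composes_to (Av v) (star_cocircuit Ed v)))"

text \<open>Positive sequence on F: enumerations a_1..a_m (list as, 0-indexed) of A and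
  f_2..f_m (list fs, with f_j = fs ! (j - 1) for 0-indexed j = 1..m-1) of F.\<close>
definition positive_sequence :: "'e sset set \<Rightarrow> 'e set \<Rightarrow> 'e sset list \<Rightarrow> 'e list \<Rightarrow> bool" where
  "positive_sequence A F as fs \<longleftrightarrow>
     distinct as \<and> set as = A \<and> distinct fs \<and> set fs = F \<and> length fs + 1 = length as
     \<and> (\<forall>j. 1 \<le> j \<and> j < length as \<longrightarrow>
          ssign (as ! j) (fs ! (j - 1)) \<noteq> 0
        \<and> (\<forall>i. j < i \<and> i < length as \<longrightarrow> ssign (as ! i) (fs ! (j - 1)) = 0)
        \<and> (\<forall>i < j. ssign (as ! i) (fs ! (j - 1)) \<in> {0, - ssign (as ! j) (fs ! (j - 1))}))"

end

theory Submission
  imports Defs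
begin

definition supp :: "'e sset \<Rightarrow> 'e set" where "supp X = fst X \<union> snd X"

lemma supp_scomp: "supp (scomp X Y) = supp X \<union> supp Y"
  by (auto simp: supp_def scomp_def)

lemma scomp_list_Cons: "scomp_list (Y # xs) = scomp Y (scomp_list xs)"
  by (simp add: scomp_list_def)

lemma supp_scomp_list: "supp (scomp_list xs) = (\<Union>Y\<in>set xs. supp Y)"
proof (induction xs)
  case Nil then show ?case by (simp add: scomp_list_def supp_def)
next
  case (Cons a xs) then show ?case by (simp add: scomp_list_Cons supp_scomp)
qed

lemma scomp_absorb: "supp Z \<subseteq> supp Y \<Longrightarrow> scomp Y Z = Y"
  by (cases Y; cases Z) (auto simp: scomp_def supp_def)

lemma circuit_shape:
  assumes "strict_total_order_on E lt" "Y \<in> circuits_tot lt"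
  shows "card (supp Y) = 3 \<and> fst Y \<inter> snd Y = {}"
proof -
  have irr: "irrefl lt" and tr: "trans lt" using assms(1)
    by (auto simp: strict_total_order_on_def strict_partial_order_on_def)
  from assms(2) obtain e1 e2 e3 where o: "(e1,e2) \<in> lt" "(e2,e3) \<in> lt"
    and Y: "Y = ({e1,e3},{e2}) \<or> Y = ({e2},{e1,e3})"
    unfolding circuits_tot_def by blast
  have "(e1,e3) \<in> lt" using tr o by (meson transD)
  hence d: "e1 \<noteq> e2" "e2 \<noteq> e3" "e1 \<noteq> e3" using irr o by (auto simp: irrefl_def)
  show ?thesis using Y d by (auto simp: supp_def)
qed

lemma conformal_same_supp:
  assumes "conformal Y Z" "supp Y = supp Z" "fst Y \<inter> snd Y = {}" "fst Z \<inter> snd Z = {}"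
  shows "Y = Z"
proof -
  have eq: "ssign Y e = ssign Z e" for e
  proof -
    have c1: "\<not> (ssign Y e = - ssign Z e \<and> ssign Y e \<noteq> 0)" using assms(1) by (simp add: conformal_def)
    have "e \<in> supp Y \<longleftrightarrow> e \<in> supp Z" using assms(2) by simp
    then show ?thesis using c1 assms(3,4) unfolding ssign_def supp_def by (auto split: if_splits)
  qed
  have "fst Y = fst Z"
  proof
    show "fst Y \<subseteq> fst Z" using eq by (fastforce simp: ssign_def split: if_splits)
    show "fst Z \<subseteq> fst Y" using eq by (fastforce simp: ssign_def split: if_splits)
  qed
  moreover have "snd Y = snd Z"
  proof
    show "snd Y \<subseteq> snd Z" using eq assms(3,4) by (fastforce simp: ssign_def split: if_splits)
    show "snd Z \<subseteq> snd Y" using eq assms(3,4) by (fastforce simp: ssign_def split: if_splits)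
  qed
  ultimately show ?thesis by (simp add: prod_eq_iff)
qed

lemma A_structure:
  assumes cu: "cubic V Ed" and tot: "strict_total_order_on Ed lt"
    and tg: "twisted_graph V Ed lt A"
  shows "A = star_cocircuit Ed ` V \<and> inj_on (star_cocircuit Ed) V"
proof -
  from tg obtain Av where A: "A = (\<Union>v\<in>V. Av v)"
    and dj: "\<forall>v\<in>V. \<forall>w\<in>V. v \<noteq> w \<longrightarrow> Av v \<inter> Av w = {}"
    and cp: "\<forall>v\<in>V. composes_to (Av v) (star_cocircuit Ed v)"
    and Asub: "A \<subseteq> circuits_po Ed lt"
    unfolding twisted_graph_def by blast
  have po: "circuits_po Ed lt \<subseteq> circuits_tot lt"
    unfolding circuits_po_def using tot by blast
  have circ: "\<And>Y. Y \<in> A \<Longrightarrow> card (supp Y) = 3 \<and> fst Y \<inter> snd Y = {}"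
    using Asub po circuit_shape[OF tot] by blast
  have Av1: "Av v = {star_cocircuit Ed v}" if v: "v \<in> V" for v
  proof -
    have sub: "Av v \<subseteq> A" using A v by blast
    from cp v obtain xs where conf: "\<forall>Y\<in>Av v. \<forall>Z\<in>Av v. conformal Y Z"
      and xs: "set xs = Av v" "scomp_list xs = star_cocircuit Ed v"
      unfolding composes_to_def by blast
    have ss: "supp (star_cocircuit Ed v) = {e\<in>Ed. fst e = v \<or> snd e = v}"
      by (auto simp: supp_def star_cocircuit_def)
    have c3: "card (supp (star_cocircuit Ed v)) = 3" using cu v ss by (simp add: cubic_def)
    have finS: "finite (supp (star_cocircuit Ed v))" using c3 card.infinite by fastforce
    have suppY: "supp Y = supp (star_cocircuit Ed v)" if "Y \<in> Av v" for Y
    proof -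
      have "supp Y \<subseteq> supp (star_cocircuit Ed v)" using xs that supp_scomp_list[of xs] by auto
      moreover have "card (supp Y) = 3" using circ sub that by blast
      ultimately show ?thesis using c3 finS card_subset_eq by metis
    qed
    obtain Y0 rest where xs0: "xs = Y0 # rest"
    proof (cases xs)
      case Nil
      then have "star_cocircuit Ed v = ({},{})" using xs(2) by (simp add: scomp_list_def)
      then have "supp (star_cocircuit Ed v) = {}" by (simp add: supp_def)
      with c3 show ?thesis by simp
    next
      case (Cons a l) then show ?thesis using that by blast
    qed
    have Y0in: "Y0 \<in> Av v" using xs(1) xs0 by auto
    have "supp (scomp_list rest) \<subseteq> supp Y0"
      using supp_scomp_list[of rest] suppY xs(1) xs0 Y0in by auto
    hence st: "star_cocircuit Ed v = Y0" using xs(2) xs0 scomp_absorb scomp_list_Cons by metis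
    have "Y = Y0" if "Y \<in> Av v" for Y
      using conformal_same_supp[of Y Y0] conf that Y0in suppY circ sub by (metis subsetD)
    then show ?thesis using st Y0in by blast
  qed
  have "A = star_cocircuit Ed ` V" using A Av1 by auto
  moreover have "inj_on (star_cocircuit Ed) V"
  proof (rule inj_onI, rule ccontr)
    fix v w assume "v \<in> V" "w \<in> V" "star_cocircuit Ed v = star_cocircuit Ed w" "v \<noteq> w"
    then show False using dj Av1 by force
  qed
  ultimately show ?thesis by blast
qed

definition inv_seq :: "('v \<times> 'v) set \<Rightarrow> 'v set \<Rightarrow> 'v list \<Rightarrow> ('v\<times>'v) list \<Rightarrow> bool" where
  "inv_seq F V vs fs \<longleftrightarrow> vs \<noteq> [] \<and> distinct vs \<and> set vs \<subseteq> V \<and> length fs + 1 = length vs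
    \<and> (\<forall>j. 1 \<le> j \<and> j < length vs \<longrightarrow> fs ! (j - 1) \<in> F \<and>
          (\<exists>i<j. fs ! (j - 1) = (vs ! i, vs ! j) \<or> fs ! (j - 1) = (vs ! j, vs ! i)))"

lemma exit_edge:
  assumes "(x, y) \<in> R\<^sup>*" "x \<in> P" "y \<notin> P"
  shows "\<exists>a b. (a, b) \<in> R \<and> a \<in> P \<and> b \<notin> P"
  using assms by (induction rule: rtrancl_induct) auto

lemma inv_extend:
  assumes I: "inv_seq F V vs fs" and ne: "set vs \<noteq> V" and con: "connected_on F V"
  shows "\<exists>b e. inv_seq F V (vs @ [b]) (fs @ [e])"
proof -
  obtain y where y: "y \<in> V" "y \<notin> set vs" using I ne by (auto simp: inv_seq_def)
  have x: "hd vs \<in> V" "hd vs \<in> set vs" using I by (auto simp: inv_seq_def)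
  have "(hd vs, y) \<in> (adj F \<inter> V \<times> V)\<^sup>*" using con x y by (auto simp: connected_on_def)
  from exit_edge[OF this x(2) y(2)]
  obtain a b where ab: "(a,b) \<in> adj F \<inter> V \<times> V" "a \<in> set vs" "b \<notin> set vs"
    by blast
  then obtain i where i: "i < length vs" "vs ! i = a" by (metis in_set_conv_nth)
  define e where "e = (if (a,b) \<in> F then (a,b) else (b,a))"
  have eF: "e \<in> F" "e = (a,b) \<or> e = (b,a)" using ab(1) by (auto simp: e_def adj_def)
  have Iv: "vs \<noteq> []" "distinct vs" "set vs \<subseteq> V" "length fs + 1 = length vs"
    and Ij: "\<And>j. 1 \<le> j \<Longrightarrow> j < length vs \<Longrightarrow> fs ! (j - 1) \<in> F \<and>
          (\<exists>i<j. fs ! (j - 1) = (vs ! i, vs ! j) \<or> fs ! (j - 1) = (vs ! j, vs ! i))"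
    using I unfolding inv_seq_def by blast+
  have "inv_seq F V (vs @ [b]) (fs @ [e])"
    unfolding inv_seq_def
  proof (intro conjI)
    show "vs @ [b] \<noteq> []" by simp
    show "distinct (vs @ [b])" using Iv ab by simp
    show "set (vs @ [b]) \<subseteq> V" using Iv ab by auto
    show "length (fs @ [e]) + 1 = length (vs @ [b])" using Iv by simp
    show "\<forall>j. 1 \<le> j \<and> j < length (vs @ [b]) \<longrightarrow> (fs @ [e]) ! (j - 1) \<in> F \<and>
          (\<exists>i<j. (fs @ [e]) ! (j - 1) = ((vs @ [b]) ! i, (vs @ [b]) ! j) \<or>
                 (fs @ [e]) ! (j - 1) = ((vs @ [b]) ! j, (vs @ [b]) ! i))"
    proof (intro allI impI)
    fix j assume j: "1 \<le> j \<and> j < length (vs @ [b])"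
    show "(fs @ [e]) ! (j - 1) \<in> F \<and>
          (\<exists>i<j. (fs @ [e]) ! (j - 1) = ((vs @ [b]) ! i, (vs @ [b]) ! j) \<or>
                 (fs @ [e]) ! (j - 1) = ((vs @ [b]) ! j, (vs @ [b]) ! i))"
    proof (cases "j < length vs")
      case True
      then have h: "fs ! (j - 1) \<in> F \<and>
          (\<exists>i<j. fs ! (j - 1) = (vs ! i, vs ! j) \<or> fs ! (j - 1) = (vs ! j, vs ! i))"
        using Ij j by blast
      have jf: "j - 1 < length fs" using True j Iv by linarith
      have f: "(fs @ [e]) ! (j - 1) = fs ! (j - 1)" using jf by (simp add: nth_append)
      have v: "\<And>k. k \<le> j \<Longrightarrow> (vs @ [b]) ! k = vs ! k" using True by (simp add: nth_append)
      show ?thesis using h f v by (metis less_imp_le order_refl)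
    next
      case False
      then have jl: "j = length vs" using j by simp
      have "j - 1 = length fs" using jl Iv by simp
      then have f: "(fs @ [e]) ! (j - 1) = e" by simp
      have vb: "(vs @ [b]) ! j = b" using jl by simp
      have va: "(vs @ [b]) ! i = a" using i by (simp add: nth_append)
      show ?thesis using f vb va eF i jl by auto
    qed
    qed
  qed
  then show ?thesis by blast
qed

lemma inv_complete:
  assumes "inv_seq F V vs fs" "finite V" "connected_on F V"
  shows "\<exists>vs' fs'. inv_seq F V vs' fs' \<and> set vs' = V"
  using assms
proof (induction "card (V - set vs)" arbitrary: vs fs rule: less_induct)
  case less
  show ?case
  proof (cases "set vs = V")
    case True then show ?thesis using less.prems by blast
  next
    case False
    then obtain b e where I: "inv_seq F V (vs @ [b]) (fs @ [e])"
      using inv_extend less.prems by blast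
    then have bm: "b \<in> V - set vs" by (auto simp: inv_seq_def)
    have eqs: "V - set (vs @ [b]) = (V - set vs) - {b}" by auto
    have "card ((V - set vs) - {b}) < card (V - set vs)"
      by (rule card_Diff1_less) (use less.prems(2) bm in auto)
    then have "card (V - set (vs @ [b])) < card (V - set vs)" by (simp only: eqs)
    from less.hyps[OF this I less.prems(2,3)] show ?thesis .
  qed
qed

lemma rtrancl_distinct_path:
  assumes "(x, y) \<in> R\<^sup>*"
  shows "\<exists>p. p \<noteq> [] \<and> hd p = x \<and> last p = y \<and> distinct p
           \<and> (\<forall>i. Suc i < length p \<longrightarrow> (p ! i, p ! Suc i) \<in> R)"
  using assms
proof (induction rule: rtrancl_induct)
  case base
  then show ?case by (intro exI[of _ "[x]"]) auto
next
  case (step y z)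
  then obtain p where p: "p \<noteq> []" "hd p = x" "last p = y" "distinct p"
    "\<forall>i. Suc i < length p \<longrightarrow> (p ! i, p ! Suc i) \<in> R" by blast
  show ?case
  proof (cases "z \<in> set p")
    case True
    then obtain k where k: "k < length p" "p ! k = z" by (metis in_set_conv_nth)
    let ?q = "take (Suc k) p"
    have "?q \<noteq> []" using p(1) by simp
    moreover have "hd ?q = x" using p(1,2) by (cases p) auto
    moreover have "last ?q = z"
    proof -
      have "last ?q = ?q ! (length ?q - 1)" using p(1) by (simp add: last_conv_nth)
      also have "\<dots> = p ! k" using k by simp
      finally show ?thesis using k by simp
    qed
    moreover have "distinct ?q" using p(4) by simp
    moreover have "\<forall>i. Suc i < length ?q \<longrightarrow> (?q ! i, ?q ! Suc i) \<in> R"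
      using p(5) by simp
    ultimately show ?thesis by blast
  next
    case False
    let ?q = "p @ [z]"
    have "hd ?q = x" using p(1,2) by simp
    moreover have "distinct ?q" using p(4) False by simp
    moreover have "\<forall>i. Suc i < length ?q \<longrightarrow> (?q ! i, ?q ! Suc i) \<in> R"
    proof (intro allI impI)
      fix i assume i: "Suc i < length ?q"
      show "(?q ! i, ?q ! Suc i) \<in> R"
      proof (cases "Suc i < length p")
        case True then show ?thesis using p(5) by (simp add: nth_append)
      next
        case False
        then have "Suc i = length p" using i by simp
        then have hi: "i = length p - 1" by simp
        have "?q ! i = y" using p(1,3) hi by (simp add: nth_append last_conv_nth)
        moreover have "?q ! Suc i = z" using \<open>Suc i = length p\<close> by (simp add: nth_append)
        ultimately show ?thesis using step.hyps(2) by simp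
      qed
    qed
    ultimately show ?thesis by auto
  qed
qed

lemma adj_conv: "(adj D)\<inverse> = adj D"
  by (auto simp: adj_def)

lemma sign_edge:
  "(x,y) \<in> Ed \<Longrightarrow> x \<noteq> y \<Longrightarrow>
     ssign (star_cocircuit Ed v) (x,y) = (if v = y then 1 else if v = x then -1 else 0)"
  by (auto simp: ssign_def star_cocircuit_def)

theorem mainTheorem16:
  fixes V :: "'v set" and Ed :: "('v \<times> 'v) set" and F :: "('v \<times> 'v) set"
    and lt :: "(('v \<times> 'v) \<times> ('v \<times> 'v)) set" and A :: "('v \<times> 'v) sset set"
  assumes "digraph_wf V Ed"
    and "cubic V Ed"
    and "spanning_tree V Ed F"
    and "strict_total_order_on Ed lt"
    and "twisted_graph V Ed lt A"
  shows "\<exists>as fs. positive_sequence A F as fs"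
proof -
  have fin: "finite V" using assms(1) by (simp add: digraph_wf_def)
  have FE: "F \<subseteq> Ed" and conF: "connected_on F V" and nc: "\<not> has_cycle F"
    using assms(3) by (auto simp: spanning_tree_def)
  have EV: "Ed \<subseteq> V \<times> V" using assms(1) by (simp add: digraph_wf_def)
  have noloop: "\<And>u w. (u,w) \<in> Ed \<Longrightarrow> u \<noteq> w \<and> (w,u) \<notin> Ed"
    using assms(1) by (auto simp: digraph_wf_def)
  obtain r where r: "r \<in> V" using conF by (auto simp: connected_on_def)
  have "inv_seq F V [r] []" using r by (simp add: inv_seq_def)
  then obtain vs fs where I: "inv_seq F V vs fs" and sV: "set vs = V"
    using inv_complete fin conF by blast
  have AV: "A = star_cocircuit Ed ` V" and inj: "inj_on (star_cocircuit Ed) V"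
    using A_structure[OF assms(2,4,5)] by auto
  have Iv: "vs \<noteq> []" "distinct vs" "length fs + 1 = length vs"
    and Ij: "\<And>j. 1 \<le> j \<Longrightarrow> j < length vs \<Longrightarrow> fs ! (j - 1) \<in> F \<and>
          (\<exists>i<j. fs ! (j - 1) = (vs ! i, vs ! j) \<or> fs ! (j - 1) = (vs ! j, vs ! i))"
    using I unfolding inv_seq_def by blast+
  have Ij': "\<And>k. k < length fs \<Longrightarrow> fs ! k \<in> F \<and>
          (\<exists>i\<le>k. fs ! k = (vs ! i, vs ! Suc k) \<or> fs ! k = (vs ! Suc k, vs ! i))"
  proof -
    fix k assume "k < length fs"
    then have "fs ! (Suc k - 1) \<in> F \<and>
          (\<exists>i<Suc k. fs ! (Suc k - 1) = (vs ! i, vs ! Suc k) \<or> fs ! (Suc k - 1) = (vs ! Suc k, vs ! i))"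
      using Ij[of "Suc k"] Iv by simp
    then show "fs ! k \<in> F \<and>
          (\<exists>i\<le>k. fs ! k = (vs ! i, vs ! Suc k) \<or> fs ! k = (vs ! Suc k, vs ! i))"
      by (simp add: less_Suc_eq_le)
  qed
  have sfF: "set fs \<subseteq> F" by (metis Ij' in_set_conv_nth subsetI)
  have key: "fs ! p \<noteq> fs ! q" if pq: "p < q" "q < length fs" for p q
  proof
    assume eq: "fs ! p = fs ! q"
    obtain i1 where i1: "i1 \<le> p" "fs ! p = (vs ! i1, vs ! Suc p) \<or> fs ! p = (vs ! Suc p, vs ! i1)"
      using Ij' pq by (meson order.strict_trans)
    obtain i2 where i2: "i2 \<le> q" "fs ! q = (vs ! i2, vs ! Suc q) \<or> fs ! q = (vs ! Suc q, vs ! i2)"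
      using Ij' pq by blast
    have lq: "Suc q < length vs" using pq Iv by simp
    have "vs ! Suc q = vs ! Suc p \<or> vs ! Suc q = vs ! i1" using i1(2) i2(2) eq by auto
    moreover have "vs ! Suc q \<noteq> vs ! Suc p" using Iv(2) lq pq by (simp add: nth_eq_iff_index_eq)
    moreover have "vs ! Suc q \<noteq> vs ! i1" using Iv(2) lq pq i1 by (simp add: nth_eq_iff_index_eq)
    ultimately show False by blast
  qed
  have dfs: "distinct fs"
    unfolding distinct_conv_nth
    by (metis key linorder_neqE_nat)
  have conn: "(vs ! 0, vs ! j) \<in> (adj (set fs))\<^sup>*" if "j < length vs" for j
    using that
  proof (induction j rule: less_induct)
    case (less j)
    show ?case
    proof (cases j)
      case 0 then show ?thesis by simp
    next
      case (Suc k)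
      then have k: "k < length fs" using less.prems Iv by simp
      obtain i where i: "i \<le> k" "fs ! k = (vs ! i, vs ! Suc k) \<or> fs ! k = (vs ! Suc k, vs ! i)"
        using Ij' k by blast
      have "fs ! k \<in> set fs" using k by simp
      then have "(vs ! i, vs ! j) \<in> adj (set fs)" using i Suc by (auto simp: adj_def)
      moreover have "(vs ! 0, vs ! i) \<in> (adj (set fs))\<^sup>*" using less i Suc by simp
      ultimately show ?thesis by simp
    qed
  qed
  have conn2: "(a, b) \<in> (adj (set fs))\<^sup>*" if "a \<in> V" "b \<in> V" for a b
  proof -
    have "a \<in> set vs" using that sV by simp
    then obtain ia where "ia < length vs" "vs ! ia = a" by (auto simp: in_set_conv_nth)
    then have 1: "(vs ! 0, a) \<in> (adj (set fs))\<^sup>*" using conn by blast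
    have "b \<in> set vs" using that sV by simp
    then obtain ib where "ib < length vs" "vs ! ib = b" by (auto simp: in_set_conv_nth)
    then have 2: "(vs ! 0, b) \<in> (adj (set fs))\<^sup>*" using conn by blast
    have "(a, vs ! 0) \<in> ((adj (set fs))\<inverse>)\<^sup>*" using 1 by (rule rtrancl_converseI)
    then have "(a, vs ! 0) \<in> (adj (set fs))\<^sup>*" by (simp add: adj_conv)
    then show ?thesis using 2 by simp
  qed
  have Fsub: "F \<subseteq> set fs"
  proof
    fix e assume eF: "e \<in> F"
    show "e \<in> set fs"
    proof (rule ccontr)
      assume ne: "e \<notin> set fs"
      obtain a b where e: "e = (a, b)" by (cases e)
      have abE: "(a,b) \<in> Ed" using eF e FE by auto
      have abV: "a \<in> V" "b \<in> V" using abE EV by auto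
      have ab: "a \<noteq> b" "(b,a) \<notin> Ed" using noloop abE by auto
      have "adj (set fs) \<subseteq> adj (F - {e})" using sfF ne by (auto simp: adj_def)
      then have "(a, b) \<in> (adj (F - {e}))\<^sup>*" using conn2 abV rtrancl_mono by blast
      then obtain p where p: "p \<noteq> []" "hd p = a" "last p = b" "distinct p"
        "\<forall>i. Suc i < length p \<longrightarrow> (p ! i, p ! Suc i) \<in> adj (F - {e})"
        using rtrancl_distinct_path by metis
      have l2: "length p \<ge> 2"
      proof (rule ccontr)
        assume "\<not> length p \<ge> 2"
        moreover have "length p \<noteq> 0" using p(1) by simp
        ultimately have "length p = 1" by linarith
        then have "hd p = last p" by (cases p) auto
        then show False using p ab by simp
      qed
      have l3: "length p \<ge> 3"
      proof (rule ccontr)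
        assume "\<not> length p \<ge> 3"
        then have lp: "length p = 2" using l2 by simp
        then have "p ! 0 = a" "p ! 1 = b" using p(1,2,3) by (auto simp: hd_conv_nth last_conv_nth)
        then have "(a, b) \<in> adj (F - {e})" using p(5) lp by (metis One_nat_def lessI numeral_2_eq_2)
        then show False using e ab FE by (auto simp: adj_def)
      qed
      have "has_cycle F"
        unfolding has_cycle_def
      proof (intro exI conjI allI impI)
        show "3 \<le> length p" by (rule l3)
        show "distinct p" by (rule p(4))
        fix i assume i: "i < length p"
        show "(p ! i, p ! ((i + 1) mod length p)) \<in> adj F"
        proof (cases "Suc i < length p")
          case True
          then have "(p ! i, p ! Suc i) \<in> adj (F - {e})" using p(5) by blast
          then show ?thesis using True by (auto simp: adj_def)
        next
          case False
          then have "Suc i = length p" using i by simp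
          then have hi: "i = length p - 1" "(i + 1) mod length p = 0" by simp_all
          then have "p ! i = b" "(i + 1) mod length p = 0" using p(1,3) by (simp_all add: last_conv_nth)
          moreover have "p ! 0 = a" using p(1,2) by (simp add: hd_conv_nth)
          ultimately show ?thesis using eF e by (auto simp: adj_def)
        qed
      qed
      then show False using nc by simp
    qed
  qed
  have sfs: "set fs = F" using sfF Fsub by blast
  have vsV: "\<And>k. k < length vs \<Longrightarrow> vs ! k \<in> V" using sV by auto
  show ?thesis
  proof (intro exI)
    show "positive_sequence A F (map (star_cocircuit Ed) vs) fs"
      unfolding positive_sequence_def
    proof (intro conjI)
      show "distinct (map (star_cocircuit Ed) vs)" using Iv(2) inj sV by (simp add: distinct_map)
      show "set (map (star_cocircuit Ed) vs) = A" using AV sV by simp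
      show "distinct fs" by (rule dfs)
      show "set fs = F" by (rule sfs)
      show "length fs + 1 = length (map (star_cocircuit Ed) vs)" using Iv by simp
      let ?as = "map (star_cocircuit Ed) vs"
      show "\<forall>j. 1 \<le> j \<and> j < length ?as \<longrightarrow>
          ssign (?as ! j) (fs ! (j - 1)) \<noteq> 0
        \<and> (\<forall>i. j < i \<and> i < length ?as \<longrightarrow> ssign (?as ! i) (fs ! (j - 1)) = 0)
        \<and> (\<forall>i < j. ssign (?as ! i) (fs ! (j - 1)) \<in> {0, - ssign (?as ! j) (fs ! (j - 1))})"
      proof (intro allI impI)
      fix j assume j: "1 \<le> j \<and> j < length (map (star_cocircuit Ed) vs)"
      then have jl: "1 \<le> j" "j < length vs" by auto
      obtain i where i: "i < j" "fs ! (j - 1) = (vs ! i, vs ! j) \<or> fs ! (j - 1) = (vs ! j, vs ! i)"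
        and eF: "fs ! (j - 1) \<in> F"
        using Ij jl by blast
      have il: "i < length vs" using i jl by simp
      have neq: "vs ! i \<noteq> vs ! j" using Iv(2) il jl i by (simp add: nth_eq_iff_index_eq)
      have dif: "\<And>k. k < length vs \<Longrightarrow> vs ! k = vs ! i \<longleftrightarrow> k = i"
                "\<And>k. k < length vs \<Longrightarrow> vs ! k = vs ! j \<longleftrightarrow> k = j"
        using Iv(2) il jl by (simp_all add: nth_eq_iff_index_eq)
      have eE: "fs ! (j - 1) \<in> Ed" using eF FE by auto
      have sg: "\<And>k. k < length vs \<Longrightarrow> ssign (map (star_cocircuit Ed) vs ! k) (fs ! (j - 1)) =
              (if k = j then (if fs ! (j - 1) = (vs ! i, vs ! j) then 1 else -1)
               else if k = i then (if fs ! (j - 1) = (vs ! i, vs ! j) then -1 else 1) else 0)"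
      proof -
        fix k assume k: "k < length vs"
        show "ssign (map (star_cocircuit Ed) vs ! k) (fs ! (j - 1)) =
              (if k = j then (if fs ! (j - 1) = (vs ! i, vs ! j) then 1 else -1)
               else if k = i then (if fs ! (j - 1) = (vs ! i, vs ! j) then -1 else 1) else 0)"
          using i(2)
        proof
          assume h: "fs ! (j - 1) = (vs ! i, vs ! j)"
          show ?thesis using sign_edge[of "vs ! i" "vs ! j" Ed "vs ! k"] h eE neq k dif by auto
        next
          assume h: "fs ! (j - 1) = (vs ! j, vs ! i)"
          show ?thesis using sign_edge[of "vs ! j" "vs ! i" Ed "vs ! k"] h eE neq k dif by auto
        qed
      qed
      have c1: "ssign (map (star_cocircuit Ed) vs ! j) (fs ! (j - 1)) \<noteq> 0"
        using sg[OF jl(2)] by simp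
      have c2: "\<forall>k. j < k \<and> k < length (map (star_cocircuit Ed) vs) \<longrightarrow>
             ssign (map (star_cocircuit Ed) vs ! k) (fs ! (j - 1)) = 0"
        using sg i(1) by auto
      have c3: "\<forall>k<j. ssign (map (star_cocircuit Ed) vs ! k) (fs ! (j - 1))
              \<in> {0, - ssign (map (star_cocircuit Ed) vs ! j) (fs ! (j - 1))}"
        using sg jl by auto
      show "ssign (?as ! j) (fs ! (j - 1)) \<noteq> 0
        \<and> (\<forall>i. j < i \<and> i < length ?as \<longrightarrow> ssign (?as ! i) (fs ! (j - 1)) = 0)
        \<and> (\<forall>i < j. ssign (?as ! i) (fs ! (j - 1)) \<in> {0, - ssign (?as ! j) (fs ! (j - 1))})"
        using c1 c2 c3 by blast
      qed
    qed
  qed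
qed

end
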